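(* Fix a positive integer $m$, graphs $H_1,\dots,H_k$ each with exactly $m$ edges, a finite complete graph $K$ on at least two vertices, and real constants $\gamma_1,\dots,\gamma_k$. Set \[ \mathcal{O}=\max_{\nu\in\Delta^K}\sum_{i=1}^k\gamma_i\,\beta(\nu;H_i). \] If $\mu\in\Delta^K$ achieves $\mathcal{O}$, then \begin{align*} m\cdot\mathcal{O}\cdot\mu(e)&=\sum_{i=1}^k\gamma_i\sum_{\substack{H\in\mathrm{cp}(K,H_i),\\ E(H)\ni e}}\mu(H)\quad\text{for each } e\in E(K),\\ m\cdot\mathcal{O}\cdot\bar\mu(x)&=\sum_{i=1}^k\gamma_i\sum_{\substack{H\in\mathrm{cp}(K,H_i),\\ V(H)\ni x}}\deg_H(x)\,\mu(H)\quad\text{for each } x\in V(K). \end{align*}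
   Context: $\Delta^K$ is the set of probability measures on $E(K)$ (edge probability measures on $K$). $\mathrm{cp}(K,H)$ is the set of (unlabeled, not necessarily induced) subgraphs of $K$ isomorphic to $H$. For $\mu\in\Delta^K$ and a subgraph $H\subseteq K$, $\mu(H)=\prod_{e\in E(H)}\mu(e)$; $\beta(\mu;H)=\sum_{H'\in\mathrm{cp}(K,H)}\mu(H')$; and $\bar\mu(x)=\sum_{y\in V(K)\setminus\{x\}}\mu(xy)$. *)

theory Defs
  imports Complex_Main
begin

text \<open>A (finite, simple) graph is a pair (vertex set, edge set), edges being 2-element vertex sets.\<close>
type_synonym 'a graph = "'a set \<times> 'a set set"

definition simple_graph :: "'a graph \<Rightarrow> bool" where
  "simple_graph G \<longleftrightarrow> finite (fst G) \<and> (\<forall>e\<in>snd G. e \<subseteq> fst G \<and> card e = 2)"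

definition complete_edges :: "'a set \<Rightarrow> 'a set set" where
  "complete_edges V = {e. e \<subseteq> V \<and> card e = 2}"

definition graph_iso :: "'b graph \<Rightarrow> 'a graph \<Rightarrow> bool" where
  "graph_iso G G' \<longleftrightarrow> (\<exists>f. bij_betw f (fst G) (fst G') \<and>
      (\<forall>u\<in>fst G. \<forall>v\<in>fst G. {u, v} \<in> snd G \<longleftrightarrow> {f u, f v} \<in> snd G'))"

text \<open>cp(K,H): (unlabeled, not necessarily induced) subgraphs of the complete graph on V isomorphic to H.\<close>
definition cp :: "'a set \<Rightarrow> 'b graph \<Rightarrow> 'a graph set" where
  "cp V H = {G. simple_graph G \<and> fst G \<subseteq> V \<and> graph_iso H G}"

definition edge_measures :: "'a set \<Rightarrow> ('a set \<Rightarrow> real) set" where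
  "edge_measures V = {\<mu>. (\<forall>e\<in>complete_edges V. 0 \<le> \<mu> e) \<and> (\<forall>e. e \<notin> complete_edges V \<longrightarrow> \<mu> e = 0)
       \<and> (\<Sum>e\<in>complete_edges V. \<mu> e) = 1}"

definition mu_graph :: "('a set \<Rightarrow> real) \<Rightarrow> 'a graph \<Rightarrow> real" where
  "mu_graph \<mu> G = (\<Prod>e\<in>snd G. \<mu> e)"

definition beta :: "'a set \<Rightarrow> ('a set \<Rightarrow> real) \<Rightarrow> 'b graph \<Rightarrow> real" where
  "beta V \<mu> H = (\<Sum>G\<in>cp V H. mu_graph \<mu> G)"

definition mu_bar :: "'a set \<Rightarrow> ('a set \<Rightarrow> real) \<Rightarrow> 'a \<Rightarrow> real" where
  "mu_bar V \<mu> x = (\<Sum>y\<in>V - {x}. \<mu> {x, y})"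

definition deg :: "'a graph \<Rightarrow> 'a \<Rightarrow> nat" where
  "deg G x = card {e\<in>snd G. x \<in> e}"

end

theory Submission
  imports Defs
begin

lemma cp_finite: assumes "finite V" shows "finite (cp V H)"
proof -
  have "cp V H \<subseteq> Pow V \<times> Pow (Pow V)"
    by (fastforce simp: cp_def simple_graph_def)
  thus ?thesis using assms by (meson finite_Pow_iff finite_SigmaI finite_subset)
qed

lemma cp_edge_sub: assumes "G \<in> cp V H" "e \<in> snd G" shows "e \<subseteq> fst G" "e \<in> complete_edges V"
  using assms by (auto simp: cp_def simple_graph_def complete_edges_def)

lemma cp_card: assumes "simple_graph H" "G \<in> cp V H" shows "card (snd G) = card (snd H)"
proof -
  have sG: "simple_graph G" and iso: "graph_iso H G" using assms by (auto simp: cp_def)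
  obtain f where bij: "bij_betw f (fst H) (fst G)"
    and E: "\<forall>u\<in>fst H. \<forall>v\<in>fst H. {u,v}\<in>snd H \<longleftrightarrow> {f u, f v}\<in>snd G"
    using iso by (auto simp: graph_iso_def)
  have inj: "inj_on f (fst H)" using bij bij_betw_imp_inj_on by blast
  have "bij_betw (image f) (snd H) (snd G)"
    unfolding bij_betw_def
  proof (intro conjI)
    show "inj_on (image f) (snd H)"
      using assms(1) inj unfolding simple_graph_def inj_on_def
      by (metis inj inj_on_image_eq_iff)
    show "image f ` snd H = snd G"
    proof
      show "image f ` snd H \<subseteq> snd G"
      proof
        fix e' assume "e' \<in> image f ` snd H"
        then obtain e where e: "e \<in> snd H" "e' = f ` e" by auto
        then have "e \<subseteq> fst H" "card e = 2" using assms(1) by (auto simp: simple_graph_def)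
        then obtain u v where "e = {u,v}" "u \<in> fst H" "v \<in> fst H" by (auto simp: card_2_iff)
        thus "e' \<in> snd G" using E e by auto
      qed
      show "snd G \<subseteq> image f ` snd H"
      proof
        fix e' assume e': "e' \<in> snd G"
        then have "e' \<subseteq> fst G" "card e' = 2" using sG by (auto simp: simple_graph_def)
        then obtain a b where ab: "e' = {a,b}" "a \<in> fst G" "b \<in> fst G" by (auto simp: card_2_iff)
        then obtain u v where uv: "u \<in> fst H" "v \<in> fst H" "a = f u" "b = f v"
          using bij by (metis bij_betw_imp_surj_on imageE)
        then have "{u,v} \<in> snd H" using E e' ab by auto
        moreover have "e' = f ` {u,v}" using ab uv by auto
        ultimately show "e' \<in> image f ` snd H" by blast
      qed
    qed
  qed
  thus ?thesis by (metis bij_betw_same_card)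
qed

lemma em_bounds: assumes "\<nu> \<in> edge_measures V" "finite V" shows "0 \<le> \<nu> b \<and> \<nu> b \<le> 1"
proof (cases "b \<in> complete_edges V")
  case True
  have fin: "finite (complete_edges V)" using assms(2) unfolding complete_edges_def by auto
  have nn: "\<forall>e\<in>complete_edges V. 0 \<le> \<nu> e" and s: "(\<Sum>e\<in>complete_edges V. \<nu> e) = 1"
    using assms(1) by (auto simp: edge_measures_def)
  have "\<nu> b \<le> (\<Sum>e\<in>complete_edges V. \<nu> e)" using member_le_sum[OF True] nn fin by blast
  thus ?thesis using s nn True by auto
next
  case False thus ?thesis using assms by (auto simp: edge_measures_def)
qed

lemma mu_graph_abs: assumes "\<nu> \<in> edge_measures V" "finite V" shows "\<bar>mu_graph \<nu> G\<bar> \<le> 1"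
proof -
  have "0 \<le> mu_graph \<nu> G" unfolding mu_graph_def using em_bounds[OF assms] by (simp add: prod_nonneg)
  moreover have "mu_graph \<nu> G \<le> 1" unfolding mu_graph_def using em_bounds[OF assms] by (simp add: prod_le_1)
  ultimately show ?thesis by simp
qed

lemma beta_abs: assumes "\<nu> \<in> edge_measures V" "finite V" shows "\<bar>beta V \<nu> H\<bar> \<le> real (card (cp V H))"
proof -
  have "\<bar>beta V \<nu> H\<bar> \<le> (\<Sum>G\<in>cp V H. \<bar>mu_graph \<nu> G\<bar>)" unfolding beta_def by (rule sum_abs)
  also have "\<dots> \<le> real (card (cp V H)) * 1" by (rule sum_bounded_above) (use mu_graph_abs[OF assms] in auto)
  finally show ?thesis by simp
qed

lemma F_bdd: assumes "finite V"
  shows "bdd_above ((\<lambda>\<nu>. \<Sum>i<k. \<gamma> i * beta V \<nu> (H i)) ` edge_measures V)"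
proof (rule bdd_aboveI2)
  fix \<nu> assume nu: "\<nu> \<in> edge_measures V"
  show "(\<Sum>i<k. \<gamma> i * beta V \<nu> (H i)) \<le> (\<Sum>i<k. \<bar>\<gamma> i\<bar> * real (card (cp V (H i))))"
  proof (rule sum_mono)
    fix i
    have "\<gamma> i * beta V \<nu> (H i) \<le> \<bar>\<gamma> i\<bar> * \<bar>beta V \<nu> (H i)\<bar>" by (metis abs_ge_self abs_mult)
    also have "\<dots> \<le> \<bar>\<gamma> i\<bar> * real (card (cp V (H i)))"
      by (rule mult_left_mono[OF beta_abs[OF nu assms]]) simp
    finally show "\<gamma> i * beta V \<nu> (H i) \<le> \<bar>\<gamma> i\<bar> * real (card (cp V (H i)))" .
  qed
qed

lemma deg_card: assumes "G \<in> cp V H" "x \<in> V"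
  shows "card {y\<in>V-{x}. {x,y} \<in> snd G} = deg G x"
proof -
  have "bij_betw (\<lambda>y. {x,y}) {y\<in>V-{x}. {x,y} \<in> snd G} {e\<in>snd G. x \<in> e}"
    unfolding bij_betw_def
  proof (intro conjI)
    show "inj_on (\<lambda>y. {x,y}) {y\<in>V-{x}. {x,y} \<in> snd G}"
    proof (rule inj_onI)
      fix y z assume y: "y \<in> {y\<in>V-{x}. {x,y} \<in> snd G}" and "z \<in> {y\<in>V-{x}. {x,y} \<in> snd G}"
        and eq: "{x,y} = {x,z}"
      have "y \<noteq> x" using y by simp
      moreover have "y \<in> {x,y}" by simp
      then have "y \<in> {x,z}" by (simp only: eq)
      ultimately show "y = z" by simp
    qed
    show "(\<lambda>y. {x,y}) ` {y\<in>V-{x}. {x,y} \<in> snd G} = {e\<in>snd G. x \<in> e}"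
    proof
      show "(\<lambda>y. {x,y}) ` {y\<in>V-{x}. {x,y} \<in> snd G} \<subseteq> {e\<in>snd G. x \<in> e}"
      proof
        fix e assume "e \<in> (\<lambda>y. {x,y}) ` {y\<in>V-{x}. {x,y} \<in> snd G}"
        then obtain y where "y \<in> {y\<in>V-{x}. {x,y} \<in> snd G}" "e = {x,y}" by (rule imageE)
        thus "e \<in> {e\<in>snd G. x \<in> e}" by simp
      qed
      show "{e\<in>snd G. x \<in> e} \<subseteq> (\<lambda>y. {x,y}) ` {y\<in>V-{x}. {x,y} \<in> snd G}"
      proof
        fix e assume e: "e \<in> {e\<in>snd G. x \<in> e}"
        then have eG: "e \<in> snd G" and xe: "x \<in> e" by simp_all
        have "e \<in> complete_edges V" using cp_edge_sub(2)[OF assms(1) eG] .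
        then have eV: "e \<subseteq> V" and c2: "card e = 2" by (simp_all add: complete_edges_def)
        from c2 obtain a b where ab: "e = {a,b}" "a \<noteq> b" by (auto simp: card_2_iff)
        obtain y where ey: "e = {x,y}" "y \<noteq> x"
        proof (cases "x = a")
          case True thus ?thesis using that[of b] ab by simp
        next
          case False then have "x = b" using xe ab by simp
          thus ?thesis using that[of a] ab by (simp add: insert_commute)
        qed
        have "y \<in> e" using ey(1) by simp
        then have "y \<in> V" using eV by (rule subsetD[rotated])
        moreover have "{x,y} \<in> snd G" using ey(1) eG by simp
        ultimately have "y \<in> {y\<in>V-{x}. {x,y} \<in> snd G}" using ey(2) by simp
        thus "e \<in> (\<lambda>y. {x,y}) ` {y\<in>V-{x}. {x,y} \<in> snd G}" by (rule image_eqI[where f="\<lambda>y. {x,y}" and x=y, OF ey(1)])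
      qed
    qed
  qed
  thus ?thesis unfolding deg_def by (rule bij_betw_same_card)
qed

lemma deg_zero: assumes "G \<in> cp V H" "x \<notin> fst G" shows "deg G x = 0"
proof -
  have "{e\<in>snd G. x \<in> e} = {}" using cp_edge_sub(1)[OF assms(1)] assms(2) by auto
  thus ?thesis unfolding deg_def by (metis card.empty)
qed

lemma snd_finite: assumes "G \<in> cp V H" shows "finite (snd G)"
proof -
  have "snd G \<subseteq> Pow (fst G)" using cp_edge_sub(1)[OF assms] by auto
  moreover have "finite (fst G)" using assms by (auto simp: cp_def simple_graph_def)
  ultimately show ?thesis by (meson finite_Pow_iff finite_subset)
qed

theorem lemma4p3:
  fixes m k :: nat and H :: "nat \<Rightarrow> 'b graph" and V :: "'a set"
    and \<gamma> :: "nat \<Rightarrow> real" and \<mu> :: "'a set \<Rightarrow> real" and Opt :: real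
  assumes "0 < m"
    and "\<forall>i<k. simple_graph (H i) \<and> card (snd (H i)) = m"
    and "finite V" and "2 \<le> card V"
    and O_def: "Opt = (SUP \<nu>\<in>edge_measures V. \<Sum>i<k. \<gamma> i * beta V \<nu> (H i))"
    and "\<mu> \<in> edge_measures V"
    and "(\<Sum>i<k. \<gamma> i * beta V \<mu> (H i)) = Opt"
  shows "(\<forall>e\<in>complete_edges V.
            real m * Opt * \<mu> e = (\<Sum>i<k. \<gamma> i * (\<Sum>G\<in>{G\<in>cp V (H i). e \<in> snd G}. mu_graph \<mu> G)))
       \<and> (\<forall>x\<in>V.
            real m * Opt * mu_bar V \<mu> x
              = (\<Sum>i<k. \<gamma> i * (\<Sum>G\<in>{G\<in>cp V (H i). x \<in> fst G}. real (deg G x) * mu_graph \<mu> G)))"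
proof -
  define CE where "CE = complete_edges V"
  define F where "F = (\<lambda>\<nu>. \<Sum>i<k. \<gamma> i * beta V \<nu> (H i))"
  define P where "P = (\<lambda>(G::'a graph) a. \<Prod>b\<in>snd G - {a}. \<mu> b)"
  define d where "d = (\<lambda>a. \<Sum>i<k. \<gamma> i * (\<Sum>G\<in>{G\<in>cp V (H i). a \<in> snd G}. P G a))"
  define R where "R = (\<lambda>a. \<Sum>i<k. \<gamma> i * (\<Sum>G\<in>{G\<in>cp V (H i). a \<in> snd G}. mu_graph \<mu> G))"
  have finCE: "finite CE" using assms(3) unfolding CE_def complete_edges_def by auto
  have finCP: "\<And>i. finite (cp V (H i))" using cp_finite[OF assms(3)] .
  have mu: "\<mu> \<in> edge_measures V" by fact
  have mu_nn: "\<And>b. 0 \<le> \<mu> b" using em_bounds[OF mu assms(3)] by blast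
  have mu_out: "\<And>b. b \<notin> CE \<Longrightarrow> \<mu> b = 0" using mu unfolding CE_def edge_measures_def by blast
  have mu_sum: "(\<Sum>b\<in>CE. \<mu> b) = 1" using mu unfolding CE_def edge_measures_def by blast
  have Fmu: "F \<mu> = Opt" using assms(7) unfolding F_def .
  have upper: "\<And>\<nu>. \<nu> \<in> edge_measures V \<Longrightarrow> F \<nu> \<le> Opt"
    unfolding O_def F_def by (rule cSUP_upper[OF _ F_bdd[OF assms(3)]])
  have muR: "\<mu> a * d a = R a" for a
  proof -
    have eq: "\<mu> a * P G a = mu_graph \<mu> G" if "G \<in> cp V (H i)" "a \<in> snd G" for G i
      unfolding P_def mu_graph_def using prod.remove[OF snd_finite[OF that(1)] that(2), of \<mu>] by simp
    have "\<mu> a * d a = (\<Sum>i<k. \<gamma> i * (\<Sum>G\<in>{G\<in>cp V (H i). a \<in> snd G}. \<mu> a * P G a))"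
      unfolding d_def by (simp add: sum_distrib_left mult.left_commute)
    also have "\<dots> = R a" unfolding R_def
    proof (rule sum.cong[OF refl])
      fix i
      have "(\<Sum>G\<in>{G\<in>cp V (H i). a \<in> snd G}. \<mu> a * P G a) = (\<Sum>G\<in>{G\<in>cp V (H i). a \<in> snd G}. mu_graph \<mu> G)"
        by (rule sum.cong[OF refl]) (use eq in blast)
      thus "\<gamma> i * (\<Sum>G\<in>{G\<in>cp V (H i). a \<in> snd G}. \<mu> a * P G a) = \<gamma> i * (\<Sum>G\<in>{G\<in>cp V (H i). a \<in> snd G}. mu_graph \<mu> G)"
        by simp
    qed
    finally show ?thesis .
  qed
  have lag: "d e' \<le> d e" if e: "e \<in> CE" "e' \<in> CE" "0 < \<mu> e" for e e'
  proof (cases "e' = e")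
    case True thus ?thesis by simp
  next
    case ne: False
    define w where "w = (\<lambda>b::'a set. (if b = e' then 1 else 0) - (if b = e then 1 else (0::real)))"
    define g where "g = (\<lambda>t. F (\<lambda>b. \<mu> b + t * w b))"
    have g_eq: "g = (\<lambda>t. \<Sum>i<k. \<gamma> i * (\<Sum>G\<in>cp V (H i). \<Prod>b\<in>snd G. \<mu> b + t * w b))"
      unfolding g_def F_def beta_def mu_graph_def by simp
    have dprod: "((\<lambda>t. \<Prod>b\<in>snd G. \<mu> b + t * w b) has_field_derivative (\<Sum>a\<in>snd G. w a * P G a)) (at 0)" for G
    proof -
      have "((\<lambda>t. \<Prod>b\<in>snd G. \<mu> b + t * w b) has_field_derivative (\<Sum>a\<in>snd G. w a * (\<Prod>b\<in>snd G-{a}. \<mu> b + 0 * w b))) (at 0)"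
        by (rule has_field_derivative_prod) (auto intro!: derivative_eq_intros)
      thus ?thesis unfolding P_def by simp
    qed
    have dsum: "(\<Sum>a\<in>snd G. w a * P G a) = (if e' \<in> snd G then P G e' else 0) - (if e \<in> snd G then P G e else 0)"
      if "G \<in> cp V (H i)" for G i
    proof -
      have "(\<Sum>a\<in>snd G. w a * P G a) = (\<Sum>a\<in>snd G. (if a = e' then P G a else 0) - (if a = e then P G a else 0))"
        unfolding w_def by (intro sum.cong refl) simp
      also have "\<dots> = (if e' \<in> snd G then P G e' else 0) - (if e \<in> snd G then P G e else 0)"
        using snd_finite[OF that] by (simp add: sum_subtractf sum.delta)
      finally show ?thesis .
    qed
    have "(g has_field_derivative (\<Sum>i<k. \<gamma> i * (\<Sum>G\<in>cp V (H i). \<Sum>a\<in>snd G. w a * P G a))) (at 0)"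
      unfolding g_eq by (intro DERIV_sum DERIV_cmult dprod)
    also have "(\<Sum>i<k. \<gamma> i * (\<Sum>G\<in>cp V (H i). \<Sum>a\<in>snd G. w a * P G a)) = d e' - d e"
    proof -
      have "(\<Sum>G\<in>cp V (H i). \<Sum>a\<in>snd G. w a * P G a) = (\<Sum>G\<in>{G\<in>cp V (H i). e' \<in> snd G}. P G e') - (\<Sum>G\<in>{G\<in>cp V (H i). e \<in> snd G}. P G e)" for i
        using finCP[of i] by (simp add: dsum sum_subtractf sum.inter_filter cong: sum.cong)
      thus ?thesis unfolding d_def by (simp add: right_diff_distrib sum_subtractf)
    qed
    finally have gd: "(g has_field_derivative d e' - d e) (at 0)" .
    have mem: "(\<lambda>b. \<mu> b + t * w b) \<in> edge_measures V" if t: "0 \<le> t" "t \<le> \<mu> e" for t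
    proof -
      have "0 \<le> \<mu> b + t * w b" for b
        using mu_nn[of b] mu_nn[of e'] t ne unfolding w_def by auto
      moreover have "\<mu> b + t * w b = 0" if "b \<notin> CE" for b
        using mu_out[OF that] that e unfolding w_def by auto
      moreover have "(\<Sum>b\<in>CE. \<mu> b + t * w b) = 1"
      proof -
        have "(\<Sum>b\<in>CE. w b) = 0" unfolding w_def using finCE e by (simp add: sum_subtractf sum.delta)
        thus ?thesis using mu_sum by (simp add: sum.distrib sum_distrib_left[symmetric])
      qed
      ultimately show ?thesis unfolding edge_measures_def CE_def by blast
    qed
    show ?thesis
    proof (rule ccontr)
      assume "\<not> d e' \<le> d e"
      then have "0 < d e' - d e" by simp
      from DERIV_pos_inc_right[OF gd this] obtain D where
        D: "D > 0" "\<And>h. h > 0 \<Longrightarrow> h < D \<Longrightarrow> g 0 < g (0 + h)" by blast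
      define h where "h = min (D/2) (\<mu> e)"
      have h: "0 < h" "h < D" "h \<le> \<mu> e" using D e(3) unfolding h_def by auto
      have "g 0 < g h" using D(2)[OF h(1,2)] by simp
      moreover have "g h \<le> Opt" unfolding g_def by (rule upper[OF mem]) (use h in auto)
      moreover have "g 0 = Opt" unfolding g_def using Fmu by simp
      ultimately show False by simp
    qed
  qed
  obtain e0 where e0: "e0 \<in> CE" "0 < \<mu> e0"
  proof (rule ccontr)
    assume "\<not> thesis"
    then have "\<forall>b\<in>CE. \<mu> b \<le> 0" using that by (meson not_le)
    then have "(\<Sum>b\<in>CE. \<mu> b) \<le> 0" by (simp add: sum_nonpos)
    thus False using mu_sum by simp
  qed
  define lam where "lam = d e0"
  have dlam: "\<mu> a * d a = \<mu> a * lam" if "a \<in> CE" for a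
  proof (cases "0 < \<mu> a")
    case True
    have "d a = lam" using lag[OF that e0(1) True] lag[OF e0(1) that e0(2)] unfolding lam_def by simp
    thus ?thesis by simp
  next
    case False then have "\<mu> a = 0" using mu_nn[of a] by simp
    thus ?thesis by simp
  qed
  have cardm: "card (snd G) = m" if "i < k" "G \<in> cp V (H i)" for i G
    using cp_card[OF _ that(2)] assms(2) that(1) by auto
  have sumR: "(\<Sum>a\<in>CE. R a) = real m * Opt"
  proof -
    have inner: "(\<Sum>a\<in>CE. \<Sum>G\<in>{G\<in>cp V (H i). a \<in> snd G}. mu_graph \<mu> G) = real m * beta V \<mu> (H i)"
      if "i < k" for i
    proof -
      have "(\<Sum>a\<in>CE. \<Sum>G\<in>{G\<in>cp V (H i). a \<in> snd G}. mu_graph \<mu> G)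
          = (\<Sum>a\<in>CE. \<Sum>G\<in>cp V (H i). if a \<in> snd G then mu_graph \<mu> G else 0)"
        using finCP[of i] by (simp add: sum.inter_filter)
      also have "\<dots> = (\<Sum>G\<in>cp V (H i). \<Sum>a\<in>CE. if a \<in> snd G then mu_graph \<mu> G else 0)"
        by (rule sum.swap)
      also have "\<dots> = (\<Sum>G\<in>cp V (H i). real m * mu_graph \<mu> G)"
      proof (rule sum.cong[OF refl])
        fix G assume G: "G \<in> cp V (H i)"
        have "snd G \<subseteq> CE" using cp_edge_sub(2)[OF G] unfolding CE_def by blast
        then have s: "{a\<in>CE. a \<in> snd G} = snd G" by blast
        have "(\<Sum>a\<in>CE. if a \<in> snd G then mu_graph \<mu> G else 0) = (\<Sum>a\<in>{a\<in>CE. a \<in> snd G}. mu_graph \<mu> G)"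
          by (rule sum.inter_filter[OF finCE, symmetric])
        also have "\<dots> = real (card (snd G)) * mu_graph \<mu> G" by (simp add: s)
        finally show "(\<Sum>a\<in>CE. if a \<in> snd G then mu_graph \<mu> G else 0) = real m * mu_graph \<mu> G"
          using cardm[OF that G] by simp
      qed
      also have "\<dots> = real m * beta V \<mu> (H i)" unfolding beta_def by (simp add: sum_distrib_left)
      finally show ?thesis .
    qed
    have "(\<Sum>a\<in>CE. R a) = (\<Sum>i<k. \<gamma> i * (\<Sum>a\<in>CE. \<Sum>G\<in>{G\<in>cp V (H i). a \<in> snd G}. mu_graph \<mu> G))"
      unfolding R_def by (subst sum.swap) (simp add: sum_distrib_left)
    also have "\<dots> = (\<Sum>i<k. \<gamma> i * (real m * beta V \<mu> (H i)))" by (intro sum.cong refl) (simp add: inner)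
    also have "\<dots> = real m * (\<Sum>i<k. \<gamma> i * beta V \<mu> (H i))" by (simp add: sum_distrib_left mult.left_commute)
    also have "\<dots> = real m * Opt" using assms(7) by simp
    finally show ?thesis .
  qed
  have "(\<Sum>a\<in>CE. R a) = (\<Sum>a\<in>CE. \<mu> a * lam)" using muR dlam by (intro sum.cong) auto
  also have "\<dots> = lam" using mu_sum by (simp add: sum_distrib_right[symmetric])
  finally have lam_eq: "lam = real m * Opt" using sumR by simp
  have c1: "real m * Opt * \<mu> e = R e" if "e \<in> CE" for e
    using dlam[OF that] muR[of e] lam_eq by (simp add: mult.commute)
  have c2: "real m * Opt * mu_bar V \<mu> x
      = (\<Sum>i<k. \<gamma> i * (\<Sum>G\<in>{G\<in>cp V (H i). x \<in> fst G}. real (deg G x) * mu_graph \<mu> G))"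
    if x: "x \<in> V" for x
  proof -
    have inCE: "{x,y} \<in> CE" if "y \<in> V - {x}" for y
      using that x unfolding CE_def complete_edges_def by auto
    have finV: "finite (V - {x})" using assms(3) by simp
    have inner2: "(\<Sum>y\<in>V-{x}. \<Sum>G\<in>{G\<in>cp V (H i). {x,y} \<in> snd G}. mu_graph \<mu> G)
        = (\<Sum>G\<in>{G\<in>cp V (H i). x \<in> fst G}. real (deg G x) * mu_graph \<mu> G)" for i
    proof -
      have "(\<Sum>y\<in>V-{x}. \<Sum>G\<in>{G\<in>cp V (H i). {x,y} \<in> snd G}. mu_graph \<mu> G)
          = (\<Sum>y\<in>V-{x}. \<Sum>G\<in>cp V (H i). if {x,y} \<in> snd G then mu_graph \<mu> G else 0)"
        using finCP[of i] by (simp add: sum.inter_filter)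
      also have "\<dots> = (\<Sum>G\<in>cp V (H i). \<Sum>y\<in>V-{x}. if {x,y} \<in> snd G then mu_graph \<mu> G else 0)"
        by (rule sum.swap)
      also have "\<dots> = (\<Sum>G\<in>cp V (H i). if x \<in> fst G then real (deg G x) * mu_graph \<mu> G else 0)"
      proof (rule sum.cong[OF refl])
        fix G assume G: "G \<in> cp V (H i)"
        have "(\<Sum>y\<in>V-{x}. if {x,y} \<in> snd G then mu_graph \<mu> G else 0)
            = (\<Sum>y\<in>{y\<in>V-{x}. {x,y} \<in> snd G}. mu_graph \<mu> G)"
          by (rule sum.inter_filter[OF finV, symmetric])
        also have "\<dots> = real (deg G x) * mu_graph \<mu> G" using deg_card[OF G x] by simp
        also have "\<dots> = (if x \<in> fst G then real (deg G x) * mu_graph \<mu> G else 0)"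
          using deg_zero[OF G] by auto
        finally show "(\<Sum>y\<in>V-{x}. if {x,y} \<in> snd G then mu_graph \<mu> G else 0)
            = (if x \<in> fst G then real (deg G x) * mu_graph \<mu> G else 0)" .
      qed
      also have "\<dots> = (\<Sum>G\<in>{G\<in>cp V (H i). x \<in> fst G}. real (deg G x) * mu_graph \<mu> G)"
        using finCP[of i] by (simp add: sum.inter_filter)
      finally show ?thesis .
    qed
    have "real m * Opt * mu_bar V \<mu> x = (\<Sum>y\<in>V-{x}. R {x,y})"
      unfolding mu_bar_def sum_distrib_left using c1[OF inCE] by (intro sum.cong) auto
    also have "\<dots> = (\<Sum>i<k. \<gamma> i * (\<Sum>y\<in>V-{x}. \<Sum>G\<in>{G\<in>cp V (H i). {x,y} \<in> snd G}. mu_graph \<mu> G))"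
      unfolding R_def by (subst sum.swap) (simp add: sum_distrib_left)
    also have "\<dots> = (\<Sum>i<k. \<gamma> i * (\<Sum>G\<in>{G\<in>cp V (H i). x \<in> fst G}. real (deg G x) * mu_graph \<mu> G))"
      by (simp add: inner2)
    finally show ?thesis .
  qed
  show ?thesis using c1 c2 unfolding R_def CE_def by blast
qed

end
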